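(* Let $(x(n))_{n\geq0}$ and $(y(n))_{n\geq0}$ be strictly increasing sequences of nonnegative integers such that $\{x(n): n\geq 0\} \cup \{y(n): n \geq 0\} = \mathbb{N}$, $x(0)=1$, $y(0)=0$, and for all $n \geq 0$, $$x(x(n)) = y(x(n)) - 1 \quad\text{and}\quad y(y(n)) = x(y(n)) - 1.$$ Then $x(n) = a(n)$ and $y(n) = b(n)$ for all $n \geq 0$.
   Context: $\mathbb{N} = \{0,1,2,\ldots\}$. A nonnegative integer is odious if the sum of its binary digits is odd and evil if it is even. $(a(n))_{n\geq0}$ is the increasing sequence of odious numbers and $(b(n))_{n\geq 0}$ the increasing sequence of evil numbers, both indexed from $0$. *)

theory Defs
  imports Main "HOL-Library.Infinite_Set"
begin

fun bin_digit_sum :: "nat \<Rightarrow> nat" where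
  "bin_digit_sum n = (if n = 0 then 0 else n mod 2 + bin_digit_sum (n div 2))"

declare bin_digit_sum.simps[simp del]

definition odious :: "nat \<Rightarrow> bool" where
  "odious n \<longleftrightarrow> odd (bin_digit_sum n)"

definition evil :: "nat \<Rightarrow> bool" where
  "evil n \<longleftrightarrow> even (bin_digit_sum n)"

text \<open>Increasing enumerations, indexed from 0.\<close>
definition odious_seq :: "nat \<Rightarrow> nat" where
  "odious_seq = enumerate {n. odious n}"

definition evil_seq :: "nat \<Rightarrow> nat" where
  "evil_seq = enumerate {n. evil n}"

end

theory Submission
  imports Defs
begin

lemma smono_range_eq_aux:
  fixes f g :: "nat \<Rightarrow> nat"
  assumes "strict_mono f" "strict_mono g" "range f \<subseteq> range g"
    and "\<forall>k<n. f k = g k" and "f n < g n"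
  shows False
proof -
  obtain m where m: "f n = g m" using assms(3) by blast
  have "m < n" using m assms(5) assms(2) by (metis strict_mono_less)
  then have "f m = f n" using m assms(4) by simp
  then have "m = n" using assms(1) strict_mono_eq by blast
  with \<open>m < n\<close> show False by simp
qed

lemma smono_range_eq:
  fixes f g :: "nat \<Rightarrow> nat"
  assumes "strict_mono f" "strict_mono g" "range f = range g"
  shows "f n = g n"
proof (induction n rule: less_induct)
  case (less n)
  show ?case
  proof (rule ccontr)
    assume "f n \<noteq> g n"
    then consider "f n < g n" | "g n < f n" by linarith
    then show False
    proof cases
      case 1 then show ?thesis using smono_range_eq_aux[of f g n] assms less by auto
    next
      case 2 then show ?thesis using smono_range_eq_aux[of g f n] assms less by auto
    qed
  qed
qed

lemma bds_double: "k > 0 \<Longrightarrow> bin_digit_sum (2*k) = bin_digit_sum k"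
  by (subst bin_digit_sum.simps) simp

lemma bds_double1: "bin_digit_sum (2*k+1) = Suc (bin_digit_sum k)"
  by (subst bin_digit_sum.simps) simp

theorem theorem5:
  fixes x y :: "nat \<Rightarrow> nat"
  assumes "strict_mono x" and "strict_mono y"
    and "range x \<union> range y = UNIV"
    and "x 0 = 1" and "y 0 = 0"
    and "\<And>n. x (x n) = y (x n) - 1"
    and "\<And>n. y (y n) = x (y n) - 1"
  shows "\<forall>n. x n = odious_seq n \<and> y n = evil_seq n"
proof -
  have xpos: "x n \<ge> 1" for n
    using assms(1,4) by (metis le0 strict_mono_less_eq)
  have F2x: "y n = x n + 1" if h: "n \<in> range x" for n
  proof -
    obtain k where "n = x k" using h by blast
    then have "x n = y n - 1" using assms(6) by simp
    with xpos[of n] show ?thesis by linarith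
  qed
  have F2y: "x n = y n + 1" if h: "n \<in> range y" for n
  proof -
    obtain k where "n = y k" using h by blast
    then have "y n = x n - 1" using assms(7) by simp
    with xpos[of n] show ?thesis by linarith
  qed
  have disj: "x i \<noteq> y j" for i j
  proof
    assume "x i = y j"
    then have "x i \<in> range x" "x i \<in> range y" by auto (metis rangeI)
    from F2x[OF this(1)] F2y[OF this(2)] show False by simp
  qed
  have F3: "min (x n) (y n) = 2*n" for n
  proof (induction n)
    case 0 then show ?case using assms(4,5) by simp
  next
    case (Suc n)
    have a: "x (Suc n) > x n" "y (Suc n) > y n" using assms(1,2) by (auto simp: strict_mono_def)
    have pair: "x n = y n + 1 \<or> y n = x n + 1" for n
      using F2x F2y assms(3) by blast
    have b: "x (Suc n) \<ge> 2*n+2" "y (Suc n) \<ge> 2*n+2"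
      using a pair[of n] Suc disj[of "Suc n" n] disj[of n "Suc n"] by auto
    have c: "min (x (Suc n)) (y (Suc n)) \<le> 2*n+2"
    proof -
      have "2*n+2 \<in> range x \<union> range y" using assms(3) by simp
      then obtain k where k: "x k = 2*n+2 \<or> y k = 2*n+2" by (metis UnE imageE)
      have "k \<ge> Suc n"
      proof (rule ccontr)
        assume "\<not> k \<ge> Suc n"
        then have "k \<le> n" by simp
        then have "x k \<le> x n" "y k \<le> y n" using assms(1,2) by (auto simp: strict_mono_less_eq)
        then show False using k pair[of n] Suc by auto
      qed
      then have "x k \<ge> x (Suc n)" "y k \<ge> y (Suc n)" using assms(1,2) by (auto simp: strict_mono_less_eq)
      then show ?thesis using k by linarith
    qed
    show ?case using b c by simp
  qed
  have F4x: "x n = 2*n \<and> y n = 2*n+1" if "n \<in> range x" for n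
    using F3[of n] F2x[OF that] by simp
  have F4y: "x n = 2*n+1 \<and> y n = 2*n" if "n \<notin> range x" for n
    using F3[of n] F2y[of n] that assms(3) by auto
  have F5: "m \<in> range x \<longleftrightarrow> odious m" for m
  proof (induction m rule: less_induct)
    case (less m)
    show ?case
    proof (cases "m = 0")
      case True
      then show ?thesis using xpos unfolding odious_def
        by (auto simp: bin_digit_sum.simps[of 0]) (metis not_one_le_zero One_nat_def)
    next
      case False
      define k where "k = m div 2"
      have km: "k < m" using False k_def by simp
      show ?thesis
      proof (cases "even m")
        case True
        then have m: "m = 2*k" "k > 0" using k_def False by auto
        have "m \<in> range x \<longleftrightarrow> k \<in> range x"
          using F4x[of k] F4y[of k] m disj by (cases "k \<in> range x") (auto, metis rangeI, metis)
        then show ?thesis using less[OF km] m bds_double unfolding odious_def by simp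
      next
        case False
        then have m: "m = 2*k+1" using k_def by simp
        have "m \<in> range x \<longleftrightarrow> k \<notin> range x"
          using F4x[of k] F4y[of k] m disj by (cases "k \<in> range x") (auto, metis, metis rangeI)
        then show ?thesis using less[OF km] m bds_double1 unfolding odious_def by simp
      qed
    qed
  qed
  have R1: "range x = {n. odious n}" using F5 by auto
  have R2: "range y = {n. evil n}"
  proof -
    have "m \<in> range y \<longleftrightarrow> m \<notin> range x" for m using disj assms(3) by blast
    then show ?thesis using F5 unfolding evil_def odious_def by auto
  qed
  have infx: "infinite (range x)"
    using assms(1) by (simp add: range_inj_infinite strict_mono_imp_inj_on)
  have infy: "infinite (range y)"
    using assms(2) by (simp add: range_inj_infinite strict_mono_imp_inj_on)
  have "x n = odious_seq n" for n
    unfolding odious_seq_def using smono_range_eq[OF assms(1) strict_mono_enumerate] infx R1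
    range_enumerate by (metis)
  moreover have "y n = evil_seq n" for n
    unfolding evil_seq_def using smono_range_eq[OF assms(2) strict_mono_enumerate] infy R2
    range_enumerate by (metis)
  ultimately show ?thesis by simp
qed

end
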